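(* Let $G$ be a claw-free graph and $C$ an even hole of length $2k$ with $k>2$, labelled $C=\mathbf{b}_0-\mathbf{a}_0-\mathbf{b}_1-\mathbf{a}_1-\dots-\mathbf{b}_{k-1}-\mathbf{a}_{k-1}-\mathbf{b}_0$. Let $\mathbf{s}\notin C$ with $\Gamma_C(\mathbf{s})=\{\mathbf{b}_0,\mathbf{a}_0,\mathbf{b}_1\}$. If a vertex $\mathbf{t}\notin C\cup\{\mathbf{s}\}$ is adjacent to at least one of $\mathbf{s},\mathbf{a}_0$ and to both $\mathbf{b}_0$ and $\mathbf{b}_1$, then $\mathbf{t}$ is adjacent to both $\mathbf{s}$ and $\mathbf{a}_0$.
   Context: A hole is an induced cycle of length at least 4; an even hole has even length. Claw-free: no induced $K_{1,3}$. $\Gamma_C(\mathbf{s})$ is the set of neighbours of $\mathbf{s}$ in $C$. *)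

theory Defs
  imports Main
begin

definition graph :: "'a set \<Rightarrow> ('a \<Rightarrow> 'a \<Rightarrow> bool) \<Rightarrow> bool" where
  "graph V E \<longleftrightarrow> (\<forall>x y. E x y \<longrightarrow> x \<in> V \<and> y \<in> V) \<and>
                   (\<forall>x y. E x y \<longrightarrow> E y x) \<and> (\<forall>x. \<not> E x x)"

definition claw_free :: "'a set \<Rightarrow> ('a \<Rightarrow> 'a \<Rightarrow> bool) \<Rightarrow> bool" where
  "claw_free V E \<longleftrightarrow> \<not> (\<exists>x\<in>V. \<exists>y1\<in>V. \<exists>y2\<in>V. \<exists>y3\<in>V.
      E x y1 \<and> E x y2 \<and> E x y3 \<and>
      y1 \<noteq> y2 \<and> y1 \<noteq> y3 \<and> y2 \<noteq> y3 \<and>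
      \<not> E y1 y2 \<and> \<not> E y1 y3 \<and> \<not> E y2 y3)"

definition induced_cycle :: "'a set \<Rightarrow> ('a \<Rightarrow> 'a \<Rightarrow> bool) \<Rightarrow> nat \<Rightarrow> (nat \<Rightarrow> 'a) \<Rightarrow> bool" where
  "induced_cycle V E n c \<longleftrightarrow> n \<ge> 3 \<and> inj_on c {0..<n} \<and> c ` {0..<n} \<subseteq> V \<and>
     (\<forall>i<n. \<forall>j<n. E (c i) (c j) \<longleftrightarrow> (j = (i + 1) mod n \<or> i = (j + 1) mod n))"

definition nbrs_in :: "('a \<Rightarrow> 'a \<Rightarrow> bool) \<Rightarrow> 'a set \<Rightarrow> 'a \<Rightarrow> 'a set" where
  "nbrs_in E C s = {v \<in> C. E s v}"

end

theory Submission
  imports Defs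
begin

theorem corollary4:
  fixes V :: "'a set" and E :: "'a \<Rightarrow> 'a \<Rightarrow> bool"
    and k :: nat and c :: "nat \<Rightarrow> 'a" and s t :: 'a
  assumes "graph V E"
    and "claw_free V E"
    and "k > 2"
    and "induced_cycle V E (2 * k) c"
    and "s \<in> V" and "s \<notin> c ` {0..<2 * k}"
    and "nbrs_in E (c ` {0..<2 * k}) s = {c 0, c 1, c 2}"
    and "t \<in> V" and "t \<notin> c ` {0..<2 * k}" and "t \<noteq> s"
    and "E t s \<or> E t (c 1)"
    and "E t (c 0)" and "E t (c 2)"
  shows "E t s \<and> E t (c 1)"
proof -
  define n where "n = 2 * k"
  define m where "m = n - 1"
  have n6: "n \<ge> 6" using assms(3) n_def by simp
  have ic: "inj_on c {0..<n}" "c ` {0..<n} \<subseteq> V"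
     "\<forall>i<n. \<forall>j<n. E (c i) (c j) \<longleftrightarrow> (j = (i + 1) mod n \<or> i = (j + 1) mod n)"
    using assms(4) n_def unfolding induced_cycle_def by auto
  have sym: "\<And>x y. E x y \<Longrightarrow> E y x" and irr: "\<And>x. \<not> E x x"
    using assms(1) unfolding graph_def by auto
  have inV: "\<And>i. i < n \<Longrightarrow> c i \<in> V" using ic(2) by auto
  have dist: "\<And>i j. i < n \<Longrightarrow> j < n \<Longrightarrow> i \<noteq> j \<Longrightarrow> c i \<noteq> c j"
    using ic(1) by (meson atLeastLessThan_iff inj_on_eq_iff zero_le)
  have tne: "\<And>i. i < n \<Longrightarrow> t \<noteq> c i" using assms(9) n_def by auto
  have sne: "\<And>i. i < n \<Longrightarrow> s \<noteq> c i" using assms(6) n_def by auto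
  have Ec: "\<And>i j. i < n \<Longrightarrow> j < n \<Longrightarrow> E (c i) (c j) \<longleftrightarrow> (j = (i + 1) mod n \<or> i = (j + 1) mod n)"
    using ic(3) by blast
  have mn: "m < n" "(m + 1) mod n = 0" using n6 m_def by auto
  have e01: "E (c 0) (c 1)" using Ec[of 0 1] n6 by simp
  have e12: "E (c 1) (c 2)" using Ec[of 1 2] n6 by simp
  have e23: "E (c 2) (c 3)" using Ec[of 2 3] n6 by simp
  have em0: "E (c 0) (c m)" using Ec[of 0 m] mn n6 by simp
  have n13: "\<not> E (c 1) (c 3)" using Ec[of 1 3] n6 by simp
  have n1m: "\<not> E (c 1) (c m)" using Ec[of 1 m] n6 m_def by simp
  have n3m: "\<not> E (c 3) (c m)" using Ec[of 3 m] n6 m_def by simp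
  have sN: "\<And>v. v \<in> c ` {0..<n} \<Longrightarrow> E s v \<longleftrightarrow> v \<in> {c 0, c 1, c 2}"
    using assms(7) n_def unfolding nbrs_in_def by blast
  have s0: "E s (c 0)" "E s (c 1)" "E s (c 2)" using sN[of "c 0"] sN[of "c 1"] sN[of "c 2"] n6 by auto
  have s3: "\<not> E s (c 3)"
  proof
    assume "E s (c 3)"
    then have "c 3 \<in> {c 0, c 1, c 2}" using sN[of "c 3"] n6 by auto
    then show False using dist[of 3 0] dist[of 3 1] dist[of 3 2] n6 by auto
  qed
  have sm: "\<not> E s (c m)"
  proof
    assume "E s (c m)"
    then have "c m \<in> {c 0, c 1, c 2}" using sN[of "c m"] mn by auto
    then show False using dist[of m 0] dist[of m 1] dist[of m 2] n6 m_def by auto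
  qed
  have cf: "\<And>x y1 y2 y3. x \<in> V \<Longrightarrow> y1 \<in> V \<Longrightarrow> y2 \<in> V \<Longrightarrow> y3 \<in> V \<Longrightarrow>
      E x y1 \<Longrightarrow> E x y2 \<Longrightarrow> E x y3 \<Longrightarrow> y1 \<noteq> y2 \<Longrightarrow> y1 \<noteq> y3 \<Longrightarrow> y2 \<noteq> y3 \<Longrightarrow>
      \<not> E y1 y2 \<Longrightarrow> \<not> E y1 y3 \<Longrightarrow> \<not> E y2 y3 \<Longrightarrow> False"
    using assms(2) unfolding claw_free_def by blast
  have c0 : "c 0 \<in> V" "c 1 \<in> V" "c 2 \<in> V" "c 3 \<in> V" "c m \<in> V"
    using inV n6 mn by auto
  have d: "c 1 \<noteq> c 3" "c 1 \<noteq> c m" "c 3 \<noteq> c m" "c 0 \<noteq> c 2"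
    using dist[of 1 3] dist[of 1 m] dist[of 3 m] dist[of 0 2] n6 m_def by auto
  have t: "t \<noteq> c 0" "t \<noteq> c 1" "t \<noteq> c 2" "t \<noteq> c 3" "t \<noteq> c m"
    using tne n6 mn by auto
  have ss: "s \<noteq> c 0" "s \<noteq> c 1" "s \<noteq> c 2" "s \<noteq> c 3" "s \<noteq> c m"
    using sne n6 mn by auto
  show ?thesis
  proof (cases "E t s")
    case True
    show ?thesis
    proof (rule ccontr)
      assume "\<not> (E t s \<and> E t (c 1))"
      then have nt1: "\<not> E t (c 1)" using True by simp
      have t3: "E t (c 3)"
        using cf[of "c 2" "c 1" "c 3" t] c0 assms(8) e12 e23 assms(13) d t nt1 n13 sym
        by metis
      have tm: "E t (c m)"
        using cf[of "c 0" "c 1" "c m" t] c0 assms(8) e01 em0 assms(12) d t nt1 n1m sym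
        by metis
      show False
        using cf[of t s "c 3" "c m"] c0 assms(8,5) True t3 tm ss d s3 sm n3m by metis
    qed
  next
    case False
    then have t1: "E t (c 1)" using assms(11) by simp
    have t3: "E t (c 3)"
      using cf[of "c 2" s "c 3" t] c0 assms(8,5) s0 e23 assms(13) ss t False s3 sym assms(10)
      by metis
    have tm: "E t (c m)"
      using cf[of "c 0" s "c m" t] c0 assms(8,5) s0 em0 assms(12) ss t False sm sym assms(10)
      by metis
    show ?thesis
      using cf[of t "c 1" "c 3" "c m"] c0 assms(8) t1 t3 tm d n13 n1m n3m by metis
  qed
qed

end
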